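(* Let $(\bar\xi,\bar x)\in\widetilde\Omega\cap\operatorname{gph}E$ be a local solution to (MPEC). Suppose that: (i) $\varphi$ is locally Lipschitz around $(\bar\xi,\bar x)$; (ii) $\operatorname{gph}E$ is closed; (iii) $\widetilde\Omega$ and $\operatorname{gph}E$ are subtransversal at $(\bar\xi,\bar x)$; (iv) a uniform error bound holds around $(\bar\xi,\bar x)$, i.e. there exist $\delta,\gamma>0$ such that $\operatorname{dist}(x,E(\xi))\le\mathfrak m(\xi,x)/\gamma$ for all $(\xi,x)\in\mathbb B(\bar\xi,\delta)\times\mathbb B(\bar x,\delta)$. Then there exists $\lambda>0$ such that $(\bar\xi,\bar x)$ is a local (unconstrained) minimizer of $$(\xi,x)\mapsto \varphi(\xi,x)+\lambda\Big(\operatorname{dist}(\xi,\Omega)+\frac{\mathfrak m(\xi,x)}{\gamma}\Big).$$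
   Context: $C\subset\mathbb R^m$ nontrivial closed convex pointed cone; $f:\mathbb R^p\times\mathbb R^n\times\mathbb R^n\to\mathbb R^m$; $K:\mathbb R^p\rightrightarrows\mathbb R^n$ has closed graph and nonempty values everywhere. VEP($\xi$): find $x\in K(\xi)$ with $f(\xi,x,z)\in C$ for all $z\in K(\xi)$; $E(\xi)$ is its solution set (with $\operatorname{dist}(x,\emptyset)=+\infty$). $\nu(\xi,x)=\sup_{z\in K(\xi)}\operatorname{dist}(f(\xi,x,z),C)$, $\mu(\xi,x)=\operatorname{dist}(x,K(\xi))$, $\mathfrak m=\nu+\mu$. (MPEC): minimize $\varphi(\xi,x)$ subject to $x\in E(\xi)$, $\xi\in\Omega$, where $\varphi:\mathbb R^p\times\mathbb R^n\to\mathbb R$ and $\Omega\subseteq\mathbb R^p$ is closed; $\widetilde\Omega=\Omega\times\mathbb R^n$. Two sets $S_1,S_2$ are subtransversal at $\bar s\in S_1\cap S_2$ if there exist $\alpha,\delta>0$ such that $(S_1+\alpha\rho\mathbb B)\cap(S_2+\alpha\rho\mathbb B)\cap\mathbb B(\bar s,\delta)\subseteq(S_1\cap S_2)+\rho\mathbb B$ for all $\rho\in[0,\delta)$; equivalently, there exist $\kappa,r>0$ with $\operatorname{dist}(w,S_1\cap S_2)\le\kappa\max\{\operatorname{dist}(w,S_1),\operatorname{dist}(w,S_2)\}$ for all $w\in\mathbb B(\bar s,r)$. *)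

theory Defs
  imports "HOL-Analysis.Analysis"
begin

definition edist :: "'a::metric_space \<Rightarrow> 'a set \<Rightarrow> ereal" where
  "edist x S = (if S = {} then \<infinity> else ereal (infdist x S))"

definition ccp_cone :: "'m::euclidean_space set \<Rightarrow> bool" where
  "ccp_cone C \<longleftrightarrow> closed C \<and> convex C \<and> cone C \<and> C \<noteq> {0} \<and> C \<inter> uminus ` C \<subseteq> {0}"

definition VEP_sol ::
  "('p \<Rightarrow> 'n \<Rightarrow> 'n \<Rightarrow> 'm) \<Rightarrow> ('p \<Rightarrow> 'n set) \<Rightarrow> 'm set \<Rightarrow> 'p \<Rightarrow> 'n set" where
  "VEP_sol f K C \<xi> = {x \<in> K \<xi>. \<forall>z\<in>K \<xi>. f \<xi> x z \<in> C}"

definition gph :: "('p \<Rightarrow> 'n set) \<Rightarrow> ('p \<times> 'n) set" where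
  "gph E = {(\<xi>, x). x \<in> E \<xi>}"

definition nu_fn ::
  "('p \<Rightarrow> 'n \<Rightarrow> 'n \<Rightarrow> 'm::metric_space) \<Rightarrow> ('p \<Rightarrow> 'n set) \<Rightarrow> 'm set \<Rightarrow> 'p \<Rightarrow> 'n \<Rightarrow> ereal" where
  "nu_fn f K C \<xi> x = (SUP z\<in>K \<xi>. ereal (infdist (f \<xi> x z) C))"

definition mu_fn :: "('p \<Rightarrow> 'n::metric_space set) \<Rightarrow> 'p \<Rightarrow> 'n \<Rightarrow> real" where
  "mu_fn K \<xi> x = infdist x (K \<xi>)"

definition merit ::
  "('p \<Rightarrow> 'n::metric_space \<Rightarrow> 'n \<Rightarrow> 'm::metric_space) \<Rightarrow> ('p \<Rightarrow> 'n set) \<Rightarrow> 'm set \<Rightarrow> 'p \<Rightarrow> 'n \<Rightarrow> ereal" where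
  "merit f K C \<xi> x = nu_fn f K C \<xi> x + ereal (mu_fn K \<xi> x)"

text \<open>Subtransversality of two sets at a point (first definition in the paper);
  S + r B is the union of closed balls of radius r around points of S.\<close>
definition subtransversal :: "'a::real_normed_vector set \<Rightarrow> 'a set \<Rightarrow> 'a \<Rightarrow> bool" where
  "subtransversal S1 S2 s \<longleftrightarrow> (\<exists>\<alpha>>0. \<exists>\<delta>>0. \<forall>\<rho>. 0 \<le> \<rho> \<and> \<rho> < \<delta> \<longrightarrow>
     (\<Union>a\<in>S1. cball a (\<alpha> * \<rho>)) \<inter> (\<Union>b\<in>S2. cball b (\<alpha> * \<rho>)) \<inter> cball s \<delta>
       \<subseteq> (\<Union>c\<in>S1 \<inter> S2. cball c \<rho>))"

definition MPEC_local_sol ::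
  "('p::metric_space \<Rightarrow> 'n::metric_space \<Rightarrow> real) \<Rightarrow> ('p \<Rightarrow> 'n set) \<Rightarrow> 'p set \<Rightarrow> 'p \<Rightarrow> 'n \<Rightarrow> bool" where
  "MPEC_local_sol \<phi> E \<Omega> \<xi>0 x0 \<longleftrightarrow> \<xi>0 \<in> \<Omega> \<and> x0 \<in> E \<xi>0 \<and>
     (\<exists>\<epsilon>>0. \<forall>\<xi> x. \<xi> \<in> \<Omega> \<and> x \<in> E \<xi> \<and> dist (\<xi>, x) (\<xi>0, x0) < \<epsilon> \<longrightarrow> \<phi> \<xi>0 x0 \<le> \<phi> \<xi> x)"

end

theory Submission
  imports Defs
begin

lemma infdist_ge: "A \<noteq> {} \<Longrightarrow> (\<And>a. a \<in> A \<Longrightarrow> d \<le> dist x a) \<Longrightarrow> d \<le> infdist x A"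
  by (simp add: infdist_notempty cINF_greatest)

lemma infdist_lessE: "A \<noteq> {} \<Longrightarrow> infdist x A < r \<Longrightarrow> \<exists>a\<in>A. dist x a < r"
  by (simp add: infdist_notempty cINF_less_iff)

theorem mainTheorem8:
  fixes f :: "'p::euclidean_space \<Rightarrow> 'n::euclidean_space \<Rightarrow> 'n \<Rightarrow> 'm::euclidean_space"
    and K :: "'p \<Rightarrow> 'n set"
    and C :: "'m set"
    and \<phi> :: "'p \<Rightarrow> 'n \<Rightarrow> real"
    and \<Omega> :: "'p set"
    and \<xi>0 :: 'p and x0 :: 'n
    and \<delta> \<gamma> :: real
  assumes C: "ccp_cone C"
    and K_closed: "closed (gph K)"
    and K_ne: "\<And>\<xi>. K \<xi> \<noteq> {}"
    and \<Omega>_closed: "closed \<Omega>"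
    and locsol: "MPEC_local_sol \<phi> (VEP_sol f K C) \<Omega> \<xi>0 x0"
    and lip: "\<exists>L r. r > 0 \<and> L \<ge> 0 \<and> lipschitz_on L (ball (\<xi>0, x0) r) (\<lambda>(\<xi>, x). \<phi> \<xi> x)"
    and gph_closed: "closed (gph (VEP_sol f K C))"
    and subtr: "subtransversal (\<Omega> \<times> UNIV) (gph (VEP_sol f K C)) (\<xi>0, x0)"
    and \<delta>pos: "\<delta> > 0" and \<gamma>pos: "\<gamma> > 0"
    and errb: "\<And>\<xi> x. \<xi> \<in> cball \<xi>0 \<delta> \<Longrightarrow> x \<in> cball x0 \<delta> \<Longrightarrow>
                 edist x (VEP_sol f K C \<xi>) \<le> merit f K C \<xi> x / ereal \<gamma>"
  shows "\<exists>lam>0. \<exists>\<epsilon>>0. \<forall>\<xi> x. dist (\<xi>, x) (\<xi>0, x0) < \<epsilon> \<longrightarrow>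
           ereal (\<phi> \<xi>0 x0) + ereal lam * (ereal (infdist \<xi>0 \<Omega>) + merit f K C \<xi>0 x0 / ereal \<gamma>)
             \<le> ereal (\<phi> \<xi> x) + ereal lam * (ereal (infdist \<xi> \<Omega>) + merit f K C \<xi> x / ereal \<gamma>)"
proof -
  define E where "E = VEP_sol f K C"
  define S1 where "S1 = \<Omega> \<times> (UNIV :: 'n set)"
  define S2 where "S2 = gph E"
  define w0 where "w0 = (\<xi>0, x0)"
  have \<xi>0\<Omega>: "\<xi>0 \<in> \<Omega>" and x0E: "x0 \<in> E \<xi>0"
    using locsol by (auto simp: MPEC_local_sol_def E_def)
  obtain \<epsilon>l where \<epsilon>l: "\<epsilon>l > 0" and Hl: "\<And>\<xi> x. \<xi> \<in> \<Omega> \<Longrightarrow> x \<in> E \<xi> \<Longrightarrow> dist (\<xi>, x) w0 < \<epsilon>l \<Longrightarrow> \<phi> \<xi>0 x0 \<le> \<phi> \<xi> x"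
    using locsol by (auto simp: MPEC_local_sol_def E_def w0_def)
  obtain L r where r: "r > 0" and L: "L \<ge> 0" and Lip: "lipschitz_on L (ball w0 r) (\<lambda>(\<xi>, x). \<phi> \<xi> x)"
    using lip unfolding w0_def by blast
  have "subtransversal S1 S2 w0" using subtr by (simp add: S1_def S2_def E_def w0_def)
  then obtain \<alpha> \<delta>s where \<alpha>: "\<alpha> > 0" and \<delta>s: "\<delta>s > 0" and H0: "\<forall>\<rho>. 0 \<le> \<rho> \<and> \<rho> < \<delta>s \<longrightarrow>
     (\<Union>a\<in>S1. cball a (\<alpha> * \<rho>)) \<inter> (\<Union>b\<in>S2. cball b (\<alpha> * \<rho>)) \<inter> cball w0 \<delta>s
       \<subseteq> (\<Union>c\<in>S1 \<inter> S2. cball c \<rho>)"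
    unfolding subtransversal_def by blast
  have H: "(\<Union>a\<in>S1. cball a (\<alpha> * \<rho>)) \<inter> (\<Union>b\<in>S2. cball b (\<alpha> * \<rho>)) \<inter> cball w0 \<delta>s
       \<subseteq> (\<Union>c\<in>S1 \<inter> S2. cball c \<rho>)" if "0 \<le> \<rho>" "\<rho> < \<delta>s" for \<rho>
    using H0 that by blast
  define k where "k = 2 / \<alpha> + 1"
  have k1: "k \<ge> 1" using \<alpha> by (simp add: k_def)
  define lam where "lam = 2 * L / \<alpha> + 1"
  have lam: "lam > 0" unfolding lam_def using \<alpha> L by (intro add_nonneg_pos divide_nonneg_pos) auto
  define \<epsilon> where "\<epsilon> = min (min \<delta> \<delta>s) (min (\<alpha> * \<delta>s / 2) (min (\<epsilon>l / k) (r / k)))"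
  have \<epsilon>pos: "\<epsilon> > 0" using \<delta>pos \<delta>s \<alpha> \<epsilon>l r k1 by (simp add: \<epsilon>_def)
  have e1: "\<epsilon> \<le> \<delta>" "\<epsilon> \<le> \<delta>s" "\<epsilon> \<le> \<alpha> * \<delta>s / 2" "\<epsilon> \<le> \<epsilon>l / k" "\<epsilon> \<le> r / k"
    unfolding \<epsilon>_def by linarith+
  have kpos: "k > 0" using k1 by linarith
  have ke: "k * \<epsilon> \<le> \<epsilon>l" "k * \<epsilon> \<le> r"
    using e1(4,5) kpos by (simp_all add: pos_le_divide_eq mult.commute)
  have ek: "\<epsilon> \<le> k * \<epsilon>" using mult_right_mono[OF k1, of \<epsilon>] \<epsilon>pos by simp
  have w0S1: "w0 \<in> S1" using \<xi>0\<Omega> by (simp add: w0_def S1_def)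
  have w0S2: "w0 \<in> S2" using x0E by (simp add: w0_def S2_def gph_def)
  have S1c: "closed S1" using \<Omega>_closed by (simp add: S1_def closed_Times)
  have S2c: "closed S2" using gph_closed by (simp add: S2_def E_def)
  have key: "\<phi> \<xi>0 x0 \<le> \<phi> \<xi> x + lam * (infdist \<xi> \<Omega> + m / \<gamma>)"
    if dw: "dist (\<xi>, x) w0 < \<epsilon>" and mm: "merit f K C \<xi> x = ereal m" for \<xi> x m
  proof -
    define w where "w = (\<xi>, x)"
    have dw': "dist w w0 < \<epsilon>" using dw by (simp add: w_def)
    have "dist \<xi> \<xi>0 \<le> dist w w0" "dist x x0 \<le> dist w w0"
      unfolding w_def w0_def using dist_fst_le[of "(\<xi>, x)" "(\<xi>0, x0)"] dist_snd_le[of "(\<xi>, x)" "(\<xi>0, x0)"] by auto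
    then have "\<xi> \<in> cball \<xi>0 \<delta>" "x \<in> cball x0 \<delta>"
      using dw' by (auto simp: \<epsilon>_def dist_commute)
    from errb[OF this] mm have "edist x (E \<xi>) \<le> ereal (m / \<gamma>)"
      using \<gamma>pos by (simp add: E_def)
    then have Ene: "E \<xi> \<noteq> {}" and dE: "infdist x (E \<xi>) \<le> m / \<gamma>"
      by (auto simp: edist_def split: if_splits)
    define t1 where "t1 = infdist w S1"
    define t2 where "t2 = infdist w S2"
    have t1a: "t1 \<le> infdist \<xi> \<Omega>"
      unfolding t1_def
    proof (rule infdist_ge)
      show "\<Omega> \<noteq> {}" using \<xi>0\<Omega> by auto
      fix a assume "a \<in> \<Omega>"
      then have "(a, x) \<in> S1" by (simp add: S1_def)
      then have "infdist w S1 \<le> dist w (a, x)" by (rule infdist_le)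
      also have "\<dots> = dist \<xi> a" by (simp add: w_def dist_Pair_Pair)
      finally show "infdist w S1 \<le> dist \<xi> a" .
    qed
    have t2a: "t2 \<le> infdist x (E \<xi>)"
      unfolding t2_def
    proof (rule infdist_ge[OF Ene])
      fix a assume "a \<in> E \<xi>"
      then have "(\<xi>, a) \<in> S2" by (simp add: S2_def gph_def)
      then have "infdist w S2 \<le> dist w (\<xi>, a)" by (rule infdist_le)
      also have "\<dots> = dist x a" by (simp add: w_def dist_Pair_Pair)
      finally show "infdist w S2 \<le> dist x a" .
    qed
    have t1b: "t1 \<le> dist w w0" unfolding t1_def by (rule infdist_le[OF w0S1])
    have t2b: "t2 \<le> dist w w0" unfolding t2_def by (rule infdist_le[OF w0S2])
    have t1n: "t1 \<ge> 0" "t2 \<ge> 0" by (simp_all add: t1_def t2_def infdist_nonneg)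
    define s where "s = infdist \<xi> \<Omega> + m / \<gamma>"
    have s0: "s \<ge> 0" using t1a t2a dE t1n unfolding s_def by linarith
    have lams: "lam * s \<ge> 0" using lam s0 by simp
    define t where "t = max t1 t2"
    have ts: "t \<le> s" using t1a t2a dE t1n unfolding s_def t_def by linarith
    have tw: "t \<le> dist w w0" using t1b t2b by (simp add: t_def)
    show ?thesis
    proof (cases "t = 0")
      case True
      then have "t1 = 0" "t2 = 0" using t1n by (auto simp: t_def max_def split: if_splits)
      then have "w \<in> S1" "w \<in> S2" using S1c S2c w0S1 w0S2
        using in_closed_iff_infdist_zero[OF S1c, of w] in_closed_iff_infdist_zero[OF S2c, of w]
        by (auto simp: t1_def t2_def)
      then have "\<xi> \<in> \<Omega>" "x \<in> E \<xi>" by (auto simp: w_def S1_def S2_def gph_def)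
      moreover have "dist (\<xi>, x) w0 < \<epsilon>l"
        using dw' ek ke unfolding w_def by linarith
      ultimately have "\<phi> \<xi>0 x0 \<le> \<phi> \<xi> x" by (rule Hl)
      then show ?thesis using lams by (simp add: s_def)
    next
      case False
      then have tp: "t > 0" using t1n by (simp add: t_def)
      define \<rho> where "\<rho> = 2 * t / \<alpha>"
      have \<rho>0: "0 \<le> \<rho>" using tp \<alpha> by (simp add: \<rho>_def)
      have "t < \<alpha> * \<delta>s / 2" using tw dw' e1 by linarith
      then have "2 * t < \<delta>s * \<alpha>" by (simp add: mult.commute)
      then have \<rho>d: "\<rho> < \<delta>s" using \<alpha> by (simp add: \<rho>_def pos_divide_less_eq)
      have ar: "\<alpha> * \<rho> = 2 * t" using \<alpha> by (simp add: \<rho>_def)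
      obtain a where a: "a \<in> S1" "dist w a < 2 * t"
        using infdist_lessE[of S1 w "2*t"] w0S1 tp unfolding t_def t1_def by fastforce
      obtain b where b: "b \<in> S2" "dist w b < 2 * t"
        using infdist_lessE[of S2 w "2*t"] w0S2 tp unfolding t_def t2_def by fastforce
      have "w \<in> cball w0 \<delta>s" using dw' e1 by (simp add: dist_commute)
      moreover have "w \<in> (\<Union>a\<in>S1. cball a (\<alpha> * \<rho>))" using a ar by (auto simp: dist_commute intro!: bexI[of _ a])
      moreover have "w \<in> (\<Union>b\<in>S2. cball b (\<alpha> * \<rho>))" using b ar by (auto simp: dist_commute intro!: bexI[of _ b])
      ultimately have "w \<in> (\<Union>c\<in>S1 \<inter> S2. cball c \<rho>)" using H[OF \<rho>0 \<rho>d] by blast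
      then obtain c where cS: "c \<in> S1" "c \<in> S2" and dc: "dist c w \<le> \<rho>" by auto
      obtain \<xi>' x' where c: "c = (\<xi>', x')" by (cases c)
      have "\<rho> = 2 / \<alpha> * t" by (simp add: \<rho>_def)
      also have "\<dots> \<le> 2 / \<alpha> * dist w w0" using tw \<alpha> by (intro mult_left_mono) auto
      finally have \<rho>t: "\<rho> \<le> 2 / \<alpha> * dist w w0" .
      have kd: "k * dist w w0 = 2 / \<alpha> * dist w w0 + dist w w0" by (simp add: k_def distrib_right)
      have dcw0: "dist c w0 \<le> k * dist w w0"
        using dist_triangle[of c w0 w] dc \<rho>t kd by linarith
      have kk: "k * dist w w0 < k * \<epsilon>" using dw' kpos by simp
      have d1: "dist c w0 < \<epsilon>l" using dcw0 kk ke by linarith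
      have d2: "dist c w0 < r" using dcw0 kk ke by linarith
      have d3: "dist w w0 < r" using dw' ek ke by linarith
      have "\<xi>' \<in> \<Omega>" "x' \<in> E \<xi>'" using cS c by (auto simp: S1_def S2_def gph_def)
      then have "\<phi> \<xi>0 x0 \<le> \<phi> \<xi>' x'" using Hl d1 c by blast
      also have "\<phi> \<xi>' x' \<le> \<phi> \<xi> x + L * dist c w"
      proof -
        have "dist ((\<lambda>(\<xi>, x). \<phi> \<xi> x) c) ((\<lambda>(\<xi>, x). \<phi> \<xi> x) w) \<le> L * dist c w"
          by (rule lipschitz_onD[OF Lip]) (use d2 d3 in \<open>auto simp: dist_commute\<close>)
        then show ?thesis by (simp add: c w_def dist_real_def)
      qed
      also have "L * dist c w \<le> L * \<rho>" using dc L by (simp add: mult_left_mono)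
      also have "L * \<rho> = (2 * L / \<alpha>) * t" by (simp add: \<rho>_def)
      also have "\<dots> \<le> (2 * L / \<alpha>) * s" using ts L \<alpha> by (intro mult_left_mono) auto
      also have "\<dots> \<le> lam * s" using s0 by (simp add: lam_def distrib_right)
      finally show ?thesis by (simp add: s_def)
    qed
  qed
  have nu0: "nu_fn f K C \<xi>0 x0 = 0"
  proof -
    have "\<And>z. z \<in> K \<xi>0 \<Longrightarrow> ereal (infdist (f \<xi>0 x0 z) C) = 0"
      using x0E by (simp add: E_def VEP_sol_def)
    then have "nu_fn f K C \<xi>0 x0 = (SUP z\<in>K \<xi>0. (0::ereal))"
      unfolding nu_fn_def by (rule SUP_cong[OF refl])
    then show ?thesis using K_ne by simp
  qed
  have mu0: "mu_fn K \<xi>0 x0 = 0" using x0E by (simp add: E_def VEP_sol_def mu_fn_def)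
  have merit0: "merit f K C \<xi>0 x0 = 0" by (simp add: merit_def nu0 mu0 zero_ereal_def)
  have meritnn: "merit f K C \<xi> x \<ge> 0" for \<xi> x
  proof -
    obtain z where z: "z \<in> K \<xi>" using K_ne by blast
    have "0 \<le> ereal (infdist (f \<xi> x z) C)" by (simp add: infdist_nonneg)
    also have "\<dots> \<le> nu_fn f K C \<xi> x" unfolding nu_fn_def by (rule SUP_upper[OF z])
    finally show ?thesis by (simp add: merit_def mu_fn_def infdist_nonneg)
  qed
  have main: "ereal (\<phi> \<xi>0 x0) + ereal lam * (ereal (infdist \<xi>0 \<Omega>) + merit f K C \<xi>0 x0 / ereal \<gamma>)
             \<le> ereal (\<phi> \<xi> x) + ereal lam * (ereal (infdist \<xi> \<Omega>) + merit f K C \<xi> x / ereal \<gamma>)"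
    if dw: "dist (\<xi>, x) (\<xi>0, x0) < \<epsilon>" for \<xi> x
  proof -
    have L0: "ereal (\<phi> \<xi>0 x0) + ereal lam * (ereal (infdist \<xi>0 \<Omega>) + merit f K C \<xi>0 x0 / ereal \<gamma>)
       = ereal (\<phi> \<xi>0 x0)" using \<xi>0\<Omega> by (simp add: merit0 zero_ereal_def)
    show "ereal (\<phi> \<xi>0 x0) + ereal lam * (ereal (infdist \<xi>0 \<Omega>) + merit f K C \<xi>0 x0 / ereal \<gamma>)
             \<le> ereal (\<phi> \<xi> x) + ereal lam * (ereal (infdist \<xi> \<Omega>) + merit f K C \<xi> x / ereal \<gamma>)"
    proof (cases "merit f K C \<xi> x")
      case (real m)
      have "\<phi> \<xi>0 x0 \<le> \<phi> \<xi> x + lam * (infdist \<xi> \<Omega> + m / \<gamma>)"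
        using key[OF _ real] dw by (simp add: w0_def)
      then show ?thesis unfolding L0 real using \<gamma>pos by simp
    next
      case PInf
      then show ?thesis unfolding L0 using \<gamma>pos lam by simp
    next
      case MInf
      then show ?thesis using meritnn[of \<xi> x] by simp
    qed
  qed
  show ?thesis using main lam \<epsilon>pos by blast
qed

end
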